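(* Let $C$ be a normal, closed cone with nonempty interior in a real Banach space. If $f:\operatorname{int} C\to\operatorname{int} C$ is $\tau$-condensing, then $\alpha f+(1-\alpha)\operatorname{id}$ is $\tau$-condensing for every $0<\alpha<1$.
   Context: A closed cone $C$ (closed convex, $\lambda C\subseteq C$ for $\lambda\ge0$, $C\cap(-C)=\{0\}$) induces the order $x\le y$ iff $y-x\in C$. $C$ is normal if there is $\kappa$ with $\|x\|\le\kappa\|y\|$ whenever $0\le x\le y$. Thompson's metric on $\operatorname{int}C$: $d_T(x,y)=\log\inf\{\beta\ge1:\beta^{-1}x\le y\le\beta x\}$. For a $d_T$-bounded set $A\subseteq\operatorname{int}C$, $\tau(A)=\inf\{d>0: A$ has a finite cover by sets of $d_T$-diameter $\le d\}$. A continuous map $f:D\to\operatorname{int}C$ ($D\subseteq\operatorname{int}C$) is $\tau$-condensing if $\tau(f(A))<\tau(A)$ for every $d_T$-bounded $A\subseteq D$ with $\tau(A)>0$. *)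

theory Defs
  imports "HOL-Analysis.Analysis" "HOL-Library.Extended_Real"
begin

definition closed_cone :: "'a::real_normed_vector set \<Rightarrow> bool" where
  "closed_cone C \<longleftrightarrow> closed C \<and> convex C \<and>
     (\<forall>x\<in>C. \<forall>l::real. l \<ge> 0 \<longrightarrow> l *\<^sub>R x \<in> C) \<and>
     C \<inter> uminus ` C = {0}"

definition cone_le :: "'a::real_normed_vector set \<Rightarrow> 'a \<Rightarrow> 'a \<Rightarrow> bool" where
  "cone_le C x y \<longleftrightarrow> y - x \<in> C"

definition normal_cone :: "'a::real_normed_vector set \<Rightarrow> bool" where
  "normal_cone C \<longleftrightarrow> (\<exists>\<kappa>::real. \<forall>x y. cone_le C 0 x \<and> cone_le C x y \<longrightarrow> norm x \<le> \<kappa> * norm y)"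

definition thompson :: "'a::real_normed_vector set \<Rightarrow> 'a \<Rightarrow> 'a \<Rightarrow> real" where
  "thompson C x y = ln (Inf {\<beta>::real. \<beta> \<ge> 1 \<and> cone_le C (inverse \<beta> *\<^sub>R x) y \<and> cone_le C y (\<beta> *\<^sub>R x)})"

definition dT_bounded :: "'a::real_normed_vector set \<Rightarrow> 'a set \<Rightarrow> bool" where
  "dT_bounded C A \<longleftrightarrow> A \<subseteq> interior C \<and> (\<exists>M. \<forall>x\<in>A. \<forall>y\<in>A. thompson C x y \<le> M)"

definition dT_finite_cover :: "'a::real_normed_vector set \<Rightarrow> 'a set \<Rightarrow> real \<Rightarrow> bool" where
  "dT_finite_cover C A d \<longleftrightarrow> (\<exists>F. finite F \<and> A \<subseteq> \<Union>F \<and>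
      (\<forall>S\<in>F. S \<subseteq> interior C \<and> (\<forall>x\<in>S. \<forall>y\<in>S. thompson C x y \<le> d)))"

text \<open>Kuratowski-type measure of noncompactness w.r.t. Thompson's metric
  (extended-real valued, so that the infimum of the empty set is \<infinity>).\<close>
definition tau :: "'a::real_normed_vector set \<Rightarrow> 'a set \<Rightarrow> ereal" where
  "tau C A = Inf (ereal ` {d. d > 0 \<and> dT_finite_cover C A d})"

definition dT_continuous_on :: "'a::real_normed_vector set \<Rightarrow> 'a set \<Rightarrow> ('a \<Rightarrow> 'a) \<Rightarrow> bool" where
  "dT_continuous_on C D f \<longleftrightarrow> (\<forall>x\<in>D. \<forall>e>0. \<exists>\<delta>>0. \<forall>y\<in>D.
      thompson C x y < \<delta> \<longrightarrow> thompson C (f x) (f y) < e)"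

definition tau_condensing :: "'a::real_normed_vector set \<Rightarrow> 'a set \<Rightarrow> ('a \<Rightarrow> 'a) \<Rightarrow> bool" where
  "tau_condensing C D f \<longleftrightarrow> D \<subseteq> interior C \<and> f ` D \<subseteq> interior C \<and> dT_continuous_on C D f \<and>
     (\<forall>A. A \<subseteq> D \<and> dT_bounded C A \<and> tau C A > 0 \<longrightarrow> tau C (f ` A) < tau C A)"

end

theory Submission
  imports Defs
begin

definition Tset :: "'a::real_normed_vector set \<Rightarrow> 'a \<Rightarrow> 'a \<Rightarrow> real set" where
  "Tset C x y = {\<beta>::real. \<beta> \<ge> 1 \<and> cone_le C (inverse \<beta> *\<^sub>R x) y \<and> cone_le C y (\<beta> *\<^sub>R x)}"

lemma thompson_Tset: "thompson C x y = ln (Inf (Tset C x y))"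
  by (simp add: thompson_def Tset_def)

lemma cone_scale: "closed_cone C \<Longrightarrow> x \<in> C \<Longrightarrow> l \<ge> 0 \<Longrightarrow> l *\<^sub>R x \<in> C"
  by (simp add: closed_cone_def)

lemma cone_zero: "closed_cone C \<Longrightarrow> 0 \<in> C"
  unfolding closed_cone_def by auto

lemma cone_add: assumes "closed_cone C" "x \<in> C" "y \<in> C" shows "x + y \<in> C"
proof -
  have cv: "convex C" using assms(1) by (simp add: closed_cone_def)
  have "(1/2::real) *\<^sub>R x + (1/2::real) *\<^sub>R y \<in> C"
    by (rule convexD[OF cv assms(2,3)]) auto
  from cone_scale[OF assms(1) this, of 2] show ?thesis by (simp add: algebra_simps)
qed

lemma T_alt:
  assumes "\<beta> \<ge> 1" "closed_cone C"
  shows "\<beta> \<in> Tset C x y \<longleftrightarrow> \<beta> *\<^sub>R y - x \<in> C \<and> \<beta> *\<^sub>R x - y \<in> C"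
proof -
  have e: "y - inverse \<beta> *\<^sub>R x = inverse \<beta> *\<^sub>R (\<beta> *\<^sub>R y - x)"
    using assms(1) by (simp add: algebra_simps)
  have e2: "\<beta> *\<^sub>R y - x = \<beta> *\<^sub>R (y - inverse \<beta> *\<^sub>R x)"
    using assms(1) by (simp add: algebra_simps)
  show ?thesis unfolding Tset_def cone_le_def
    using assms e e2 cone_scale[OF assms(2), of "\<beta> *\<^sub>R y - x" "inverse \<beta>"]
      cone_scale[OF assms(2), of "y - inverse \<beta> *\<^sub>R x" \<beta>]
    by auto
qed

lemma T_nonempty:
  assumes cc: "closed_cone C" and x: "x \<in> interior C" and y: "y \<in> interior C"
  shows "\<exists>\<beta>. \<beta> \<in> Tset C x y"
proof -
  obtain e where e: "e > 0" "ball x e \<subseteq> C" using x by (meson mem_interior)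
  obtain e' where e': "e' > 0" "ball y e' \<subseteq> C" using y by (meson mem_interior)
  define \<beta> where "\<beta> = 1 + norm y / e + norm x / e'"
  have b1: "\<beta> \<ge> 1" using e e' by (simp add: \<beta>_def)
  have n1: "norm y / \<beta> < e"
  proof -
    have "e * \<beta> = e + norm y + e * (norm x / e')" using e by (simp add: \<beta>_def algebra_simps)
    moreover have "e * (norm x / e') \<ge> 0" using e e' by simp
    ultimately have "norm y < e * \<beta>" using e by linarith
    thus ?thesis using b1 by (simp add: divide_simps)
  qed
  have n2: "norm x / \<beta> < e'"
  proof -
    have "e' * \<beta> = e' + e' * (norm y / e) + norm x" using e' by (simp add: \<beta>_def algebra_simps)
    moreover have "e' * (norm y / e) \<ge> 0" using e e' by simp
    ultimately have "norm x < e' * \<beta>" using e' by linarith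
    thus ?thesis using b1 by (simp add: divide_simps)
  qed
  have "x - inverse \<beta> *\<^sub>R y \<in> ball x e"
    using n1 b1 by (simp add: dist_norm divide_inverse mult.commute)
  hence "x - inverse \<beta> *\<^sub>R y \<in> C" using e by auto
  from cone_scale[OF cc this, of \<beta>] b1 have c1: "\<beta> *\<^sub>R x - y \<in> C"
    by (simp add: algebra_simps)
  have "y - inverse \<beta> *\<^sub>R x \<in> ball y e'"
    using n2 b1 by (simp add: dist_norm divide_inverse mult.commute)
  hence "y - inverse \<beta> *\<^sub>R x \<in> C" using e' by auto
  from cone_scale[OF cc this, of \<beta>] b1 have c2: "\<beta> *\<^sub>R y - x \<in> C"
    by (simp add: algebra_simps)
  show ?thesis using T_alt[OF b1 cc] c1 c2 by blast
qed

lemma T_ge1: "\<beta> \<in> Tset C x y \<Longrightarrow> \<beta> \<ge> 1"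
  by (simp add: Tset_def)

lemma T_up:
  assumes cc: "closed_cone C" and "x \<in> C" "y \<in> C" "\<beta> \<in> Tset C x y" "\<beta> \<le> \<beta>'"
  shows "\<beta>' \<in> Tset C x y"
proof -
  have b: "\<beta> \<ge> 1" "\<beta>' \<ge> 1" using assms T_ge1 by force+
  have h: "\<beta> *\<^sub>R y - x \<in> C" "\<beta> *\<^sub>R x - y \<in> C" using T_alt[OF b(1) cc] assms by auto
  have e1: "\<beta>' *\<^sub>R y - x = (\<beta> *\<^sub>R y - x) + (\<beta>' - \<beta>) *\<^sub>R y" by (simp add: algebra_simps)
  have e2: "\<beta>' *\<^sub>R x - y = (\<beta> *\<^sub>R x - y) + (\<beta>' - \<beta>) *\<^sub>R x" by (simp add: algebra_simps)
  have "(\<beta> *\<^sub>R y - x) + (\<beta>' - \<beta>) *\<^sub>R y \<in> C" "(\<beta> *\<^sub>R x - y) + (\<beta>' - \<beta>) *\<^sub>R x \<in> C"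
    using h assms by (auto intro!: cone_add[OF cc] cone_scale[OF cc])
  then show ?thesis unfolding T_alt[OF b(2) cc] e1 e2 by blast
qed

lemma T_trans:
  assumes cc: "closed_cone C" and "b1 \<in> Tset C x y" "b2 \<in> Tset C y z"
  shows "b1 * b2 \<in> Tset C x z"
proof -
  have b: "b1 \<ge> 1" "b2 \<ge> 1" using assms T_ge1 by force+
  hence b3: "b1 * b2 \<ge> 1" by (metis mult_mono' mult_1_left zero_le_one)
  have h: "b1 *\<^sub>R y - x \<in> C" "b1 *\<^sub>R x - y \<in> C" "b2 *\<^sub>R z - y \<in> C" "b2 *\<^sub>R y - z \<in> C"
    using T_alt[OF b(1) cc] T_alt[OF b(2) cc] assms by auto
  have e1: "(b1*b2) *\<^sub>R z - x = b1 *\<^sub>R (b2 *\<^sub>R z - y) + (b1 *\<^sub>R y - x)" by (simp add: algebra_simps)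
  have e2: "(b1*b2) *\<^sub>R x - z = b2 *\<^sub>R (b1 *\<^sub>R x - y) + (b2 *\<^sub>R y - z)" by (simp add: algebra_simps)
  have "b1 *\<^sub>R (b2 *\<^sub>R z - y) + (b1 *\<^sub>R y - x) \<in> C" "b2 *\<^sub>R (b1 *\<^sub>R x - y) + (b2 *\<^sub>R y - z) \<in> C"
    using h b by (auto intro!: cone_add[OF cc] cone_scale[OF cc])
  then show ?thesis unfolding T_alt[OF b3 cc] e1 e2 by blast
qed

lemma T_mix:
  assumes cc: "closed_cone C" and "\<beta> \<in> Tset C x x'" "\<beta> \<in> Tset C y y'" "0 \<le> a" "a \<le> 1"
  shows "\<beta> \<in> Tset C (a *\<^sub>R x + (1-a) *\<^sub>R y) (a *\<^sub>R x' + (1-a) *\<^sub>R y')"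
proof -
  have b: "\<beta> \<ge> 1" using assms T_ge1 by force
  have h: "\<beta> *\<^sub>R x' - x \<in> C" "\<beta> *\<^sub>R x - x' \<in> C" "\<beta> *\<^sub>R y' - y \<in> C" "\<beta> *\<^sub>R y - y' \<in> C"
    using T_alt[OF b cc] assms by auto
  have e1: "\<beta> *\<^sub>R (a *\<^sub>R x' + (1-a) *\<^sub>R y') - (a *\<^sub>R x + (1-a) *\<^sub>R y)
      = a *\<^sub>R (\<beta> *\<^sub>R x' - x) + (1-a) *\<^sub>R (\<beta> *\<^sub>R y' - y)" by (simp add: algebra_simps)
  have e2: "\<beta> *\<^sub>R (a *\<^sub>R x + (1-a) *\<^sub>R y) - (a *\<^sub>R x' + (1-a) *\<^sub>R y')
      = a *\<^sub>R (\<beta> *\<^sub>R x - x') + (1-a) *\<^sub>R (\<beta> *\<^sub>R y - y')" by (simp add: algebra_simps)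
  have "a *\<^sub>R (\<beta> *\<^sub>R x' - x) + (1-a) *\<^sub>R (\<beta> *\<^sub>R y' - y) \<in> C"
       "a *\<^sub>R (\<beta> *\<^sub>R x - x') + (1-a) *\<^sub>R (\<beta> *\<^sub>R y - y') \<in> C"
    using h assms by (auto intro!: cone_add[OF cc] cone_scale[OF cc])
  then show ?thesis unfolding T_alt[OF b cc] e1 e2 by blast
qed

lemma Inf_T_ge1:
  assumes "closed_cone C" "x \<in> interior C" "y \<in> interior C"
  shows "Inf (Tset C x y) \<ge> 1"
  using T_nonempty[OF assms] by (intro cInf_greatest) (auto simp: T_ge1)

lemma thompson_nonneg:
  assumes "closed_cone C" "x \<in> interior C" "y \<in> interior C"
  shows "thompson C x y \<ge> 0"
  using Inf_T_ge1[OF assms] by (simp add: thompson_Tset)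

lemma thompson_le_T:
  assumes "closed_cone C" "\<beta> \<in> Tset C x y" "x \<in> interior C" "y \<in> interior C"
  shows "thompson C x y \<le> ln \<beta>"
proof -
  have "Inf (Tset C x y) \<le> \<beta>" using assms(2) by (intro cInf_lower bdd_belowI[of _ 1]) (auto simp: T_ge1)
  thus ?thesis using Inf_T_ge1[OF assms(1,3,4)] by (simp add: thompson_Tset)
qed

lemma T_of_thompson_less:
  assumes cc: "closed_cone C" "x \<in> interior C" "y \<in> interior C" "thompson C x y < d"
  shows "exp d \<in> Tset C x y"
proof -
  have I: "Inf (Tset C x y) \<ge> 1" using Inf_T_ge1[OF assms(1-3)] .
  have "ln (Inf (Tset C x y)) < d" using assms(4) by (simp add: thompson_Tset)
  hence "Inf (Tset C x y) < exp d" using I by (metis exp_ln less_le_trans zero_less_one exp_less_cancel_iff)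
  then have "\<exists>t\<in>Tset C x y. t < exp d"
    using T_nonempty[OF assms(1-3)] by (intro cInf_lessD) auto
  then obtain t where t: "t \<in> Tset C x y" "t < exp d" by blast
  show ?thesis
    by (rule T_up[OF assms(1) _ _ t(1)]) (use assms(2,3) t interior_subset in auto)
qed

lemma thompson_triangle:
  assumes cc: "closed_cone C" and x: "x \<in> interior C" and y: "y \<in> interior C" and z: "z \<in> interior C"
  shows "thompson C x z \<le> thompson C x y + thompson C y z"
proof (rule field_le_epsilon)
  fix e :: real assume e: "e > 0"
  have "exp (thompson C x y + e/2) \<in> Tset C x y" by (rule T_of_thompson_less) (use assms e in auto)
  moreover have "exp (thompson C y z + e/2) \<in> Tset C y z" by (rule T_of_thompson_less) (use assms e in auto)
  ultimately have "exp (thompson C x y + e/2) * exp (thompson C y z + e/2) \<in> Tset C x z"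
    by (rule T_trans[OF cc])
  from thompson_le_T[OF cc this x z] show "thompson C x z \<le> thompson C x y + thompson C y z + e"
    by (simp add: ln_mult)
qed

lemma interior_mix:
  assumes "closed_cone C" "x \<in> interior C" "y \<in> interior C" "0 \<le> a" "a \<le> 1"
  shows "a *\<^sub>R x + (1-a) *\<^sub>R y \<in> interior C"
proof -
  have "convex (interior C)" using assms(1) by (simp add: closed_cone_def convex_interior)
  thus ?thesis using assms by (intro convexD) auto
qed

lemma one_side:
  assumes cc: "closed_cone C" and h1: "B1 *\<^sub>R b - a \<in> C" and h2: "B2 *\<^sub>R v - u \<in> C"
    and h3: "v - c *\<^sub>R b \<in> C" and hv: "v \<in> C" and B: "B2 \<le> B1"
    and c: "0 \<le> c" "c \<le> 1" and al: "0 \<le> \<alpha>" "\<alpha> \<le> 1"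
  shows "((1-\<alpha>*c)*B1 + \<alpha>*c*B2) *\<^sub>R (\<alpha> *\<^sub>R v + (1-\<alpha>) *\<^sub>R b) - (\<alpha> *\<^sub>R u + (1-\<alpha>) *\<^sub>R a) \<in> C"
proof -
  have eq: "((1-\<alpha>*c)*B1 + \<alpha>*c*B2) *\<^sub>R (\<alpha> *\<^sub>R v + (1-\<alpha>) *\<^sub>R b) - (\<alpha> *\<^sub>R u + (1-\<alpha>) *\<^sub>R a)
    = \<alpha> *\<^sub>R (B2 *\<^sub>R v - u) + (1-\<alpha>) *\<^sub>R (B1 *\<^sub>R b - a)
      + (\<alpha>*(B1-B2)*(1-\<alpha>)) *\<^sub>R (v - c *\<^sub>R b) + (\<alpha>*(B1-B2)*\<alpha>*(1-c)) *\<^sub>R v"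
    by (simp add: algebra_simps)
  have "\<alpha> *\<^sub>R (B2 *\<^sub>R v - u) + (1-\<alpha>) *\<^sub>R (B1 *\<^sub>R b - a)
      + (\<alpha>*(B1-B2)*(1-\<alpha>)) *\<^sub>R (v - c *\<^sub>R b) + (\<alpha>*(B1-B2)*\<alpha>*(1-c)) *\<^sub>R v \<in> C"
    using assms by (auto intro!: cone_add[OF cc] cone_scale[OF cc])
  thus ?thesis unfolding eq .
qed

lemma main_part:
  fixes C :: "'a::real_normed_vector set" and f :: "'a \<Rightarrow> 'a" and \<alpha> :: real
  assumes cc: "closed_cone C"
    and fint: "f ` interior C \<subseteq> interior C"
    and al: "0 < \<alpha>" "\<alpha> < 1"
    and AD: "A \<subseteq> interior C" and bd: "dT_bounded C A" and pos: "tau C A > 0"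
    and lt: "tau C (f ` A) < tau C A"
  shows "tau C ((\<lambda>x. \<alpha> *\<^sub>R f x + (1 - \<alpha>) *\<^sub>R x) ` A) < tau C A"
proof -
  define g where "g = (\<lambda>x. \<alpha> *\<^sub>R f x + (1 - \<alpha>) *\<^sub>R x)"
  have gint: "g x \<in> interior C" if "x \<in> interior C" for x
    unfolding g_def using interior_mix[OF cc, of "f x" x \<alpha>] fint that al by auto
  obtain M where M: "\<forall>x\<in>A. \<forall>y\<in>A. thompson C x y \<le> M" using bd by (auto simp: dT_bounded_def)
  define M1 where "M1 = max M 1"
  have "dT_finite_cover C A M1" unfolding dT_finite_cover_def M1_def
    using AD M by (intro exI[of _ "{A}"]) force
  moreover have "M1 > 0" unfolding M1_def by simp
  ultimately have "tau C A \<le> ereal M1" unfolding tau_def by (intro Inf_lower imageI) auto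
  then obtain r where r: "tau C A = ereal r" using pos by (cases "tau C A") auto
  have r0: "r > 0" using pos r by simp
  have Ane: "A \<noteq> {}"
  proof
    assume "A = {}"
    hence "dT_finite_cover C A (r/2)" unfolding dT_finite_cover_def by (intro exI[of _ "{}"]) auto
    hence "tau C A \<le> ereal (r/2)" unfolding tau_def using r0 by (intro Inf_lower imageI) auto
    thus False using r r0 by simp
  qed
  then obtain a0 where a0: "a0 \<in> A" by blast
  have "\<exists>y\<in>ereal ` {d. d > 0 \<and> dT_finite_cover C (f ` A) d}. y < ereal r"
    using lt r unfolding tau_def by (simp add: Inf_less_iff)
  then obtain d0 where d0: "d0 > 0" "dT_finite_cover C (f ` A) d0" "d0 < r" by auto
  obtain F0 where F0: "finite F0" "f ` A \<subseteq> \<Union>F0"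
    "\<forall>S\<in>F0. S \<subseteq> interior C \<and> (\<forall>x\<in>S. \<forall>y\<in>S. thompson C x y \<le> d0)"
    using d0(2) unfolding dT_finite_cover_def by blast
  define p where "p S = (SOME z. z \<in> S \<inter> f ` A)" for S
  define K where "K = (\<Sum>S\<in>F0. \<bar>thompson C (f a0) (p S)\<bar>)"
  define R where "R = M + thompson C a0 (f a0) + K + d0"
  have fA: "f a \<in> interior C" if "a \<in> A" for a using fint AD that by auto
  have Rb: "thompson C a (f a) \<le> R" if a: "a \<in> A" for a
  proof -
    obtain S where S: "S \<in> F0" "f a \<in> S" using F0(2) a by auto
    have pS: "p S \<in> S \<inter> f ` A" unfolding p_def by (rule someI[of _ "f a"]) (use S a in auto)
    have pI: "p S \<in> interior C" using pS bspec[OF F0(3) S(1)] by auto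
    have "\<bar>thompson C (f a0) (p S)\<bar> \<le> K" unfolding K_def
      by (rule member_le_sum[OF S(1) _ F0(1)]) auto
    hence "thompson C (f a0) (p S) \<le> K" by linarith
    moreover have "thompson C (p S) (f a) \<le> d0" using bspec[OF F0(3) S(1)] pS S by auto
    moreover have "thompson C (f a0) (f a) \<le> thompson C (f a0) (p S) + thompson C (p S) (f a)"
      by (rule thompson_triangle[OF cc fA[OF a0] pI fA[OF a]])
    moreover have "thompson C a (f a) \<le> thompson C a a0 + thompson C a0 (f a)"
      by (rule thompson_triangle[OF cc]) (use a a0 AD fA in auto)
    moreover have "thompson C a0 (f a) \<le> thompson C a0 (f a0) + thompson C (f a0) (f a)"
      by (rule thompson_triangle[OF cc]) (use a a0 AD fA in auto)
    moreover have "thompson C a a0 \<le> M" using M a a0 by auto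
    ultimately show ?thesis unfolding R_def by linarith
  qed
  have R0: "R \<ge> 0"
    using Rb[OF a0] thompson_nonneg[OF cc, of a0 "f a0"] AD a0 fA[OF a0] by auto
  define c where "c = inverse (exp (R+1))"
  have "exp (R+1) \<ge> 1" using R0 by simp
  hence c: "0 < c" "c \<le> 1" unfolding c_def by (auto simp: inverse_le_1_iff)
  have cb: "f a - c *\<^sub>R a \<in> C" if a: "a \<in> A" for a
  proof -
    have "exp (R+1) \<in> Tset C a (f a)"
      by (rule T_of_thompson_less[OF cc]) (use a AD fA Rb[OF a] in auto)
    moreover have e1: "exp (R+1) \<ge> 1" using R0 by simp
    ultimately have "exp (R+1) *\<^sub>R f a - a \<in> C" using T_alt[OF e1 cc, of a "f a"] by blast
    from cone_scale[OF cc this, of c] c show ?thesis by (simp add: algebra_simps c_def)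
  qed
  define s2 where "s2 = (d0 + r) / 2"
  define k where "k = \<alpha> * c"
  have kk: "\<alpha> * c \<le> \<alpha>" using c al by (simp add: mult_left_le)
  have k1: "0 < k" using c al unfolding k_def by simp
  have k2: "k < 1" using al kk unfolding k_def by linarith
  note k = k1 k2
  have es: "exp s2 < exp r" using d0 unfolding s2_def by simp
  have s20: "s2 > 0" using d0 r0 unfolding s2_def by simp
  define E where "E = exp r + k*(exp r - exp s2)/(2*(1-k))"
  have "k*(exp r - exp s2)/(2*(1-k)) > 0" using k es by (intro divide_pos_pos mult_pos_pos) auto
  hence E: "exp r < E" unfolding E_def by linarith
  have Epos: "E > 0" using E exp_gt_zero[of r] by linarith
  have lnE: "r < ln E" using ln_less_cancel_iff[of "exp r" E] E Epos by simp
  have "tau C A < ereal (ln E)" using lnE r by simp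
  hence "\<exists>y\<in>ereal ` {d. d > 0 \<and> dT_finite_cover C A d}. y < ereal (ln E)"
    unfolding tau_def by (simp add: Inf_less_iff)
  then obtain d1 where d1: "dT_finite_cover C A d1" "d1 < ln E" by auto
  obtain F1 where F1: "finite F1" "A \<subseteq> \<Union>F1"
    "\<forall>S\<in>F1. S \<subseteq> interior C \<and> (\<forall>x\<in>S. \<forall>y\<in>S. thompson C x y \<le> d1)"
    using d1(1) unfolding dT_finite_cover_def by blast
  define \<beta> where "\<beta> = (1-k)*E + k*exp s2"
  have "(1-k)*E + k*exp s2 = exp r - k*(exp r - exp s2)/2"
    unfolding E_def using k by (simp add: field_simps)
  moreover have "k*(exp r - exp s2)/2 > 0" using k es by simp
  ultimately have blt: "\<beta> < exp r" unfolding \<beta>_def by linarith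
  have "\<beta> - exp s2 = (1-k) * (E - exp s2)" unfolding \<beta>_def by (simp add: algebra_simps)
  moreover have "(1-k) * (E - exp s2) \<ge> 0"
  proof -
    have "E - exp s2 > 0" using E es by linarith
    thus ?thesis using k by simp
  qed
  moreover have "exp s2 \<ge> 1" using s20 by simp
  ultimately have b1: "\<beta> \<ge> 1" by linarith
  have lnb: "ln \<beta> < r" using ln_less_cancel_iff[of \<beta> "exp r"] blt b1 by simp
  define Dm where "Dm = max (ln \<beta>) (r/2)"
  have Dm: "Dm > 0" "Dm < r" using lnb r0 unfolding Dm_def by auto
  have piece: "thompson C (g a) (g b) \<le> Dm"
    if ab: "a \<in> A" "b \<in> A" "a \<in> S" "b \<in> S" "S \<in> F1" "f a \<in> T" "f b \<in> T" "T \<in> F0" for a b S T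
  proof -
    have aI: "a \<in> interior C" "b \<in> interior C" using ab AD by auto
    have "exp (ln E) \<in> Tset C a b"
      by (rule T_of_thompson_less[OF cc aI]) (use bspec[OF F1(3) ab(5)] ab d1 in force)
    hence ET: "E \<in> Tset C a b" using exp_ln[OF Epos] by simp
    have es1: "exp s2 \<ge> 1" using s20 by simp
    have ST: "exp s2 \<in> Tset C (f a) (f b)"
      by (rule T_of_thompson_less[OF cc fA[OF ab(1)] fA[OF ab(2)]])
         (use bspec[OF F0(3) ab(8)] ab d0 s2_def in force)
    have "exp r \<ge> 1" using r0 by simp
    hence E1: "E \<ge> 1" using E by linarith
    have h: "E *\<^sub>R b - a \<in> C" "E *\<^sub>R a - b \<in> C" using ET T_alt[OF E1 cc, of a b] by simp_all
    have h2: "exp s2 *\<^sub>R f b - f a \<in> C" "exp s2 *\<^sub>R f a - f b \<in> C"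
      using ST T_alt[OF es1 cc, of "f a" "f b"] by simp_all
    have fC: "f a \<in> C" "f b \<in> C" using fA ab interior_subset by blast+
    have Bl: "exp s2 \<le> E" using E es by linarith
    have "\<beta> *\<^sub>R g b - g a \<in> C" unfolding \<beta>_def g_def k_def
      by (rule one_side[OF cc h(1) h2(1) cb[OF ab(2)] fC(2) Bl]) (use c al in auto)
    moreover have "\<beta> *\<^sub>R g a - g b \<in> C" unfolding \<beta>_def g_def k_def
      by (rule one_side[OF cc h(2) h2(2) cb[OF ab(1)] fC(1) Bl]) (use c al in auto)
    ultimately have "\<beta> \<in> Tset C (g a) (g b)" using T_alt[OF b1 cc, of "g a" "g b"] by blast
    from thompson_le_T[OF cc this gint[OF aI(1)] gint[OF aI(2)]]
    show ?thesis unfolding Dm_def by linarith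
  qed
  define G where "G = (\<lambda>(S,T). g ` (A \<inter> S \<inter> f -` T)) ` (F1 \<times> F0)"
  have "dT_finite_cover C (g ` A) Dm" unfolding dT_finite_cover_def
  proof (intro exI[of _ G] conjI)
    show "finite G" unfolding G_def using F0(1) F1(1) by auto
    show "g ` A \<subseteq> \<Union>G"
    proof
      fix y assume "y \<in> g ` A"
      then obtain a where a: "a \<in> A" "y = g a" by auto
      obtain S where S: "S \<in> F1" "a \<in> S" using F1(2) a by auto
      obtain T where T: "T \<in> F0" "f a \<in> T" using F0(2) a by auto
      show "y \<in> \<Union>G" unfolding G_def using a S T by (auto intro!: bexI[of _ "(S,T)"])
    qed
    show "\<forall>P\<in>G. P \<subseteq> interior C \<and> (\<forall>x\<in>P. \<forall>y\<in>P. thompson C x y \<le> Dm)"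
    proof
      fix P assume P: "P \<in> G"
      then obtain S T where ST: "S \<in> F1" "T \<in> F0" "P = g ` (A \<inter> S \<inter> f -` T)" unfolding G_def by auto
      have "P \<subseteq> interior C" using ST AD gint by auto
      moreover have "\<forall>x\<in>P. \<forall>y\<in>P. thompson C x y \<le> Dm" using ST piece by auto
      ultimately show "P \<subseteq> interior C \<and> (\<forall>x\<in>P. \<forall>y\<in>P. thompson C x y \<le> Dm)" ..
    qed
  qed
  hence "tau C (g ` A) \<le> ereal Dm" unfolding tau_def using Dm by (intro Inf_lower imageI) auto
  also have "\<dots> < tau C A" using Dm r by simp
  finally show ?thesis unfolding g_def .
qed


theorem corollary2p6:
  fixes C :: "'a::banach set" and f :: "'a \<Rightarrow> 'a" and \<alpha> :: real
  assumes "closed_cone C" and "normal_cone C" and "interior C \<noteq> {}"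
    and "tau_condensing C (interior C) f"
    and "0 < \<alpha>" and "\<alpha> < 1"
  shows "tau_condensing C (interior C) (\<lambda>x. \<alpha> *\<^sub>R f x + (1 - \<alpha>) *\<^sub>R x)"
proof -
  note cc = assms(1)
  have fint: "f ` interior C \<subseteq> interior C" and cont: "dT_continuous_on C (interior C) f"
    and cond: "\<And>A. A \<subseteq> interior C \<Longrightarrow> dT_bounded C A \<Longrightarrow> tau C A > 0 \<Longrightarrow> tau C (f ` A) < tau C A"
    using assms(4) unfolding tau_condensing_def by blast+
  define g where "g = (\<lambda>x. \<alpha> *\<^sub>R f x + (1 - \<alpha>) *\<^sub>R x)"
  have gint: "g x \<in> interior C" if "x \<in> interior C" for x
    unfolding g_def using interior_mix[OF cc, of "f x" x \<alpha>] fint that assms(5,6) by auto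
  have gcont: "dT_continuous_on C (interior C) g"
    unfolding dT_continuous_on_def
  proof (intro ballI allI impI)
    fix x e assume x: "x \<in> interior C" and e: "(e::real) > 0"
    obtain d1 where d1: "d1 > 0" "\<forall>y\<in>interior C. thompson C x y < d1 \<longrightarrow> thompson C (f x) (f y) < e/2"
      using cont x e unfolding dT_continuous_on_def by (meson half_gt_zero)
    show "\<exists>\<delta>>0. \<forall>y\<in>interior C. thompson C x y < \<delta> \<longrightarrow> thompson C (g x) (g y) < e"
    proof (intro exI[of _ "min d1 (e/2)"] conjI ballI impI)
      show "min d1 (e/2) > 0" using d1 e by simp
      fix y assume y: "y \<in> interior C" and th: "thompson C x y < min d1 (e/2)"
      have fx: "f x \<in> interior C" "f y \<in> interior C" using fint x y by auto
      have "exp (e/2) \<in> Tset C (f x) (f y)"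
        by (rule T_of_thompson_less[OF cc fx]) (use d1 y th in auto)
      moreover have "exp (e/2) \<in> Tset C x y"
        by (rule T_of_thompson_less[OF cc x y]) (use th in auto)
      ultimately have "exp (e/2) \<in> Tset C (g x) (g y)" unfolding g_def
        by (rule T_mix[OF cc]) (use assms(5,6) in auto)
      from thompson_le_T[OF cc this gint[OF x] gint[OF y]] e
      show "thompson C (g x) (g y) < e" by simp
    qed
  qed
  show ?thesis unfolding tau_condensing_def
  proof (intro conjI allI impI)
    show "interior C \<subseteq> interior C" by simp
    show "(\<lambda>x. \<alpha> *\<^sub>R f x + (1 - \<alpha>) *\<^sub>R x) ` interior C \<subseteq> interior C"
      using gint unfolding g_def by auto
    show "dT_continuous_on C (interior C) (\<lambda>x. \<alpha> *\<^sub>R f x + (1 - \<alpha>) *\<^sub>R x)"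
      using gcont unfolding g_def .
    fix A assume A: "A \<subseteq> interior C \<and> dT_bounded C A \<and> 0 < tau C A"
    show "tau C ((\<lambda>x. \<alpha> *\<^sub>R f x + (1 - \<alpha>) *\<^sub>R x) ` A) < tau C A"
      by (rule main_part[OF cc fint assms(5,6)]) (use A cond in auto)
  qed
qed

end
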